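(* Let $\mathbb{F}_q$ be any finite field and let $\mathcal{Q}=\mathbb{F}_q^3$ with the relation: $(x_1,y_1,z_1)$ and $(x_2,y_2,z_2)$ commute iff $x_1y_2-y_1x_2=z_1-z_2$. Then there exist two lines $L_1,L_2$ in $\mathbb{F}_q^3$ such that $L_1\cup L_2$ is a non-commuting subset of $\mathcal{Q}$ of cardinality $2q$ which is not contained in any strictly larger non-commuting subset of $\mathcal{Q}$.
   Context: A line in $\mathbb{F}_q^3$ is a set $\{p+tv: t\in\mathbb{F}_q\}$ with $p\in\mathbb{F}_q^3$, $v\in\mathbb{F}_q^3\setminus\{0\}$. A subset of $\mathcal{Q}$ is non-commuting if no two distinct elements of it commute. *)

theory Defs
  imports Main
begin

type_synonym 'a pt3 = "'a \<times> 'a \<times> 'a"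

definition line3 :: "'a::field pt3 \<Rightarrow> 'a pt3 \<Rightarrow> 'a pt3 set" where
  "line3 p v = (case p of (p1, p2, p3) \<Rightarrow> case v of (v1, v2, v3) \<Rightarrow>
     {(p1 + t * v1, p2 + t * v2, p3 + t * v3) | t. True})"

definition is_line3 :: "'a::field pt3 set \<Rightarrow> bool" where
  "is_line3 L \<longleftrightarrow> (\<exists>p v. v \<noteq> (0, 0, 0) \<and> L = line3 p v)"

definition commutes :: "'a::field pt3 \<Rightarrow> 'a pt3 \<Rightarrow> bool" where
  "commutes a b = (case a of (x1, y1, z1) \<Rightarrow> case b of (x2, y2, z2) \<Rightarrow>
     x1 * y2 - y1 * x2 = z1 - z2)"

definition noncommuting :: "'a::field pt3 set \<Rightarrow> bool" where
  "noncommuting S \<longleftrightarrow> (\<forall>a\<in>S. \<forall>b\<in>S. a \<noteq> b \<longrightarrow> \<not> commutes a b)"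

end

theory Submission
  imports Defs
begin

theorem lemma7p3:
  shows "\<exists>L1 L2 :: ('a::{finite, field}) pt3 set.
           is_line3 L1 \<and> is_line3 L2 \<and>
           noncommuting (L1 \<union> L2) \<and>
           card (L1 \<union> L2) = 2 * card (UNIV :: 'a set) \<and>
           (\<forall>S. noncommuting S \<and> L1 \<union> L2 \<subseteq> S \<longrightarrow> S = L1 \<union> L2)"
proof -
  define L1 :: "'a pt3 set" where "L1 = range (\<lambda>t. (t, 0, t))"
  define L2 :: "'a pt3 set" where "L2 = range (\<lambda>t. (t, 1, 1))"
  have l1: "is_line3 L1"
    unfolding is_line3_def
    by (rule exI[of _ "(0,0,0)"], rule exI[of _ "(1,0,1)"]) (auto simp: line3_def L1_def)
  have l2: "is_line3 L2"
    unfolding is_line3_def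
    by (rule exI[of _ "(0,1,1)"], rule exI[of _ "(1,0,0)"]) (auto simp: line3_def L2_def)
  have nc: "noncommuting (L1 \<union> L2)"
    unfolding noncommuting_def commutes_def L1_def L2_def
    by (auto simp: algebra_simps)
  have disj: "L1 \<inter> L2 = {}" unfolding L1_def L2_def by auto
  have c1: "card L1 = card (UNIV :: 'a set)"
    unfolding L1_def by (rule card_image) (auto simp: inj_on_def)
  have c2: "card L2 = card (UNIV :: 'a set)"
    unfolding L2_def by (rule card_image) (auto simp: inj_on_def)
  have card: "card (L1 \<union> L2) = 2 * card (UNIV :: 'a set)"
    using card_Un_disjoint[OF finite finite disj] c1 c2 by simp
  have maxi: "\<forall>S. noncommuting S \<and> L1 \<union> L2 \<subseteq> S \<longrightarrow> S = L1 \<union> L2"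
  proof (intro allI impI)
    fix S :: "'a pt3 set"
    assume A: "noncommuting S \<and> L1 \<union> L2 \<subseteq> S"
    show "S = L1 \<union> L2"
    proof
      show "S \<subseteq> L1 \<union> L2"
      proof
        fix a assume aS: "a \<in> S"
        obtain x y z where a: "a = (x, y, z)" by (cases a) auto
        show "a \<in> L1 \<union> L2"
        proof (rule ccontr)
          assume na: "a \<notin> L1 \<union> L2"
          show False
          proof (cases "y = 1")
            case True
            define b where "b = (x - z + 1, 1::'a, 1::'a)"
            have "b \<in> L2" unfolding b_def L2_def by auto
            hence "b \<in> S" using A by auto
            moreover have "a \<noteq> b" using na \<open>b \<in> L2\<close> by auto
            moreover have "commutes a b" unfolding a b_def commutes_def using True
              by (simp add: algebra_simps)
            ultimately show False using A aS unfolding noncommuting_def by blast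
          next
            case False
            define t where "t = z / (1 - y)"
            have ne: "1 - y \<noteq> 0" using False by simp
            define b where "b = (t, 0::'a, t)"
            have "b \<in> L1" unfolding b_def L1_def by auto
            hence "b \<in> S" using A by auto
            moreover have "a \<noteq> b" using na \<open>b \<in> L1\<close> by auto
            moreover have "t * (1 - y) = z" unfolding t_def using ne by simp
            hence "commutes a b" unfolding a b_def commutes_def
              by (simp add: algebra_simps)
            ultimately show False using A aS unfolding noncommuting_def by blast
          qed
        qed
      qed
      show "L1 \<union> L2 \<subseteq> S" using A by auto
    qed
  qed
  show ?thesis using l1 l2 nc card maxi by blast
qed

end
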